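(* Assume the hypotheses listed in the context. Then there exists $\delta^*>0$ with the following property: if $0<\delta_1,\delta_2\le\delta^*$ and, for $i=1,2$, $W^i=(w^i_1,\dots,w^i_n)\in C^1([-\delta_i,\delta_i];\mathbb R^n)$ with $w^i_1([-\delta_i,\delta_i])\subseteq[-\delta_i,\delta_i]$ satisfies $(W^i)'(t)=H(t;W^i(t),W^i(w^i_1(t));(W^i)'(t),(W^i)'(w^i_1(t)))$ for $|t|\le\delta_i$, $W^i(0)=0$, $(W^i)'(0)=P$, and $(t;W^i(t),W^i(w^i_1(t));(W^i)'(t),(W^i)'(w^i_1(t)))\in N_\varepsilon(\mathcal P)$ for $|t|\le\delta_i$, then $W^1=W^2$ on $[-\min(\delta_1,\delta_2),\min(\delta_1,\delta_2)]$.
   Context: Hypotheses: $\|\cdot\|$ is a norm on $\mathbb R^n$; $H=(h_1,\dots,h_n)$ is continuous from an open subset of $\mathbb R^{4n+1}$ to $\mathbb R^n$, written $H(t;\zeta^0,\zeta^1;\xi^0,\xi^1)$; $P=(p_1,\dots,p_n)$ satisfies $P=H(0;\mathbf0,\mathbf0;P,P)$ and $|p_1|\le1$; $\mathcal P=(0;\mathbf0,\mathbf0;P,P)$; $N_\varepsilon(\mathcal P)=\{(t;\zeta^0,\zeta^1;\xi^0,\xi^1):|t|+\|\zeta^0\|+\|\zeta^1\|+\|\xi^0-P\|+\|\xi^1-P\|\le\varepsilon\}$ lies in the domain of $H$, and on it: (i) $H$ is $\Lambda$-Lipschitz in $t$; (ii) $\|H(t;\bar\zeta^0,\bar\zeta^1;\xi^0,\xi^1)-H(t;\zeta^0,\zeta^1;\xi^0,\xi^1)\|\le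 L_0\|\bar\zeta^0-\zeta^0\|+L_1\|\bar\zeta^1-\zeta^1\|$; (iii) $\|H(t;\zeta^0,\zeta^1;\bar\xi^0,\bar\xi^1)-H(t;\zeta^0,\zeta^1;\xi^0,\xi^1)\|\le C_0\|\bar\xi^0-\xi^0\|+C_1\|\bar\xi^1-\xi^1\|$ with $C_0+C_1<1$; (iv) $|h_1|\le1$. *)

theory Defs
  imports "HOL-Analysis.Analysis"
begin

definition is_norm :: "(real ^ 'n \<Rightarrow> real) \<Rightarrow> bool" where
  "is_norm nrm \<longleftrightarrow>
     (\<forall>x. 0 \<le> nrm x) \<and> (\<forall>x. nrm x = 0 \<longleftrightarrow> x = 0) \<and>
     (\<forall>c x. nrm (c *\<^sub>R x) = \<bar>c\<bar> * nrm x) \<and>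
     (\<forall>x y. nrm (x + y) \<le> nrm x + nrm y)"

definition Nbhd ::
  "(real ^ 'n \<Rightarrow> real) \<Rightarrow> real ^ 'n \<Rightarrow> real \<Rightarrow>
   (real \<times> (real ^ 'n) \<times> (real ^ 'n) \<times> (real ^ 'n) \<times> (real ^ 'n)) set" where
  "Nbhd nrm P eps = {(t, z0, z1, x0, x1).
     \<bar>t\<bar> + nrm z0 + nrm z1 + nrm (x0 - P) + nrm (x1 - P) \<le> eps}"

end

theory Submission
  imports Defs
begin

lemma mvt_bound:
  fixes f :: "real \<Rightarrow> 'b::real_normed_vector"
  assumes "\<And>x. x\<in>{a..b} \<Longrightarrow> (f has_vector_derivative f' x) (at x within {a..b})"
    and "\<And>x. x\<in>{a..b} \<Longrightarrow> norm (f' x) \<le> B"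
    and "x\<in>{a..b}" "y\<in>{a..b}"
  shows "norm (f x - f y) \<le> B * \<bar>x - y\<bar>"
proof -
  have "norm (f x - f y) \<le> B * norm (x - y)"
  proof (rule differentiable_bound[of "{a..b}" f "\<lambda>x h. h *\<^sub>R f' x"])
    show "convex {a..b}" by simp
    show "(f has_derivative (\<lambda>h. h *\<^sub>R f' t)) (at t within {a..b})" if "t\<in>{a..b}" for t
      using assms(1)[OF that] by (simp add: has_vector_derivative_def)
    show "onorm (\<lambda>h. h *\<^sub>R f' t) \<le> B" if "t\<in>{a..b}" for t
      using assms(2)[OF that] onorm_scaleR_left[of "\<lambda>x::real. x" "f' t"] onorm_id[where 'a=real] by simp
  qed (use assms in auto)
  then show ?thesis by simp
qed

lemma is_normD:
  assumes "is_norm nrm"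
  shows "nrm x \<ge> 0" "nrm 0 = 0" "nrm (-x) = nrm x" "nrm (x + y) \<le> nrm x + nrm y"
    "nrm (x - y) = nrm (y - x)" "nrm (c *\<^sub>R x) = \<bar>c\<bar> * nrm x" "nrm x = 0 \<longleftrightarrow> x = 0"
proof -
  have neg: "nrm (-v) = nrm v" for v
  proof -
    have "nrm ((-1) *\<^sub>R v) = \<bar>-1\<bar> * nrm v" using assms unfolding is_norm_def by blast
    then show ?thesis by simp
  qed
  show "nrm (-x) = nrm x" by (rule neg)
  show "nrm (x - y) = nrm (y - x)" using neg[of "y - x"] by simp
qed (use assms in \<open>auto simp: is_norm_def\<close>)

lemma nrm_sum:
  assumes "is_norm nrm"
  shows "nrm (sum f A) \<le> (\<Sum>i\<in>A. nrm (f i))"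
proof (induction A rule: infinite_finite_induct)
  case (insert x F)
  then show ?case using is_normD(4)[OF assms, of "f x" "sum f F"] by simp
qed (use is_normD(2)[OF assms] in simp_all)

lemma nrm_upper:
  fixes nrm :: "real ^ 'n \<Rightarrow> real"
  assumes "is_norm nrm"
  shows "\<exists>c>0. \<forall>x. nrm x \<le> c * norm x"
proof -
  define c where "c = (\<Sum>i\<in>UNIV. nrm (axis i (1::real))) + 1"
  have c0: "c > 0" unfolding c_def using is_normD(1)[OF assms] by (simp add: add_pos_nonneg sum_nonneg add.commute)
  have "nrm x \<le> c * norm x" for x
  proof -
    have "nrm x = nrm (\<Sum>i\<in>UNIV. x$i *\<^sub>R axis i 1)"
      using basis_expansion[of x] by (simp add: scalar_mult_eq_scaleR)
    also have "\<dots> \<le> (\<Sum>i\<in>UNIV. nrm (x$i *\<^sub>R axis i 1))" by (rule nrm_sum[OF assms])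
    also have "\<dots> = (\<Sum>i\<in>UNIV. \<bar>x$i\<bar> * nrm (axis i 1))" using is_normD(6)[OF assms] by simp
    also have "\<dots> \<le> (\<Sum>i\<in>UNIV. norm x * nrm (axis i 1))"
      by (intro sum_mono mult_right_mono component_le_norm_cart is_normD(1)[OF assms])
    also have "\<dots> \<le> c * norm x" unfolding c_def by (simp add: sum_distrib_left[symmetric] algebra_simps)
    finally show ?thesis .
  qed
  with c0 show ?thesis by blast
qed

lemma nrm_lower:
  fixes nrm :: "real ^ 'n \<Rightarrow> real"
  assumes "is_norm nrm"
  shows "\<exists>c>0. \<forall>x. norm x \<le> c * nrm x"
proof -
  obtain c where c: "c > 0" "\<And>x. nrm x \<le> c * norm x" using nrm_upper[OF assms] by blast
  have lip: "\<bar>nrm y - nrm x\<bar> \<le> c * dist y x" for x y :: "real^'n"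
  proof -
    have "nrm y \<le> nrm (y - x) + nrm x" using is_normD(4)[OF assms, of "y - x" x] by simp
    moreover have "nrm x \<le> nrm (x - y) + nrm y" using is_normD(4)[OF assms, of "x - y" y] by simp
    moreover have "nrm (x - y) = nrm (y - x)" by (rule is_normD(5)[OF assms])
    moreover have "nrm (y - x) \<le> c * dist y x" using c(2)[of "y - x"] by (simp add: dist_norm)
    ultimately show ?thesis by linarith
  qed
  have cont: "continuous_on UNIV nrm"
    unfolding continuous_on_iff
  proof (intro ballI allI impI)
    fix x :: "real^'n" and e :: real assume e: "e > 0"
    show "\<exists>d>0. \<forall>x'\<in>UNIV. dist x' x < d \<longrightarrow> dist (nrm x') (nrm x) < e"
    proof (intro exI[of _ "e / c"] conjI ballI impI)
      show "e / c > 0" using e c(1) by simp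
      fix y :: "real^'n" assume "dist y x < e / c"
      then have "c * dist y x < e" using c(1) by (simp add: field_simps)
      then show "dist (nrm y) (nrm x) < e" using lip[of y x] by (simp add: dist_real_def)
    qed
  qed
  obtain v :: "real^'n" where v: "norm v = 1"
    using vector_choose_size[of 1] by auto
  have "compact (sphere (0::real^'n) 1)" by simp
  moreover have "sphere (0::real^'n) 1 \<noteq> {}" using v by auto
  ultimately obtain m where m: "m \<in> sphere 0 1" "\<And>y. y \<in> sphere 0 1 \<Longrightarrow> nrm m \<le> nrm y"
    using continuous_attains_inf[of "sphere (0::real^'n) 1" nrm] cont
    by (metis continuous_on_subset top_greatest)
  have mpos: "nrm m > 0" using m(1) is_normD(1,7)[OF assms, of m] by force
  have "norm x \<le> (1 / nrm m) * nrm x" for x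
  proof (cases "x = 0")
    case False
    have "nrm m \<le> nrm ((1 / norm x) *\<^sub>R x)" using m(2) False by simp
    also have "\<dots> = nrm x / norm x" using is_normD(6)[OF assms] by simp
    finally show ?thesis using mpos False by (simp add: field_simps)
  qed (use is_normD[OF assms] in simp)
  then show ?thesis using mpos by (intro exI[of _ "1 / nrm m"]) auto
qed


lemma sup_contract:
  fixes g :: "'a \<Rightarrow> real"
  assumes "S \<noteq> {}" "\<And>x. x \<in> S \<Longrightarrow> g x \<le> B" "\<beta> < 1"
    and "\<And>a. (\<And>y. y \<in> S \<Longrightarrow> g y \<le> a) \<Longrightarrow> \<forall>x\<in>S. g x \<le> \<alpha> + \<beta> * a"
  shows "\<forall>x\<in>S. g x \<le> \<alpha> / (1 - \<beta>)"
proof -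
  define a where "a = Sup (g ` S)"
  have bdd: "bdd_above (g ` S)" by (meson assms(2) bdd_aboveI2)
  have up: "g y \<le> a" if "y \<in> S" for y unfolding a_def using bdd that by (auto intro: cSup_upper)
  have all: "\<forall>x\<in>S. g x \<le> \<alpha> + \<beta> * a" using assms(4) up by blast
  have "Sup (g ` S) \<le> \<alpha> + \<beta> * a" by (rule cSup_least) (use assms(1) all in auto)
  then have "a \<le> \<alpha> + \<beta> * a" unfolding a_def .
  then have "a \<le> \<alpha> / (1 - \<beta>)" using assms(3) by (simp add: field_simps)
  then show ?thesis using up by force
qed

locale sys =
  fixes nrm :: "real ^ 'n \<Rightarrow> real"
    and i1 :: 'n
    and H :: "real \<Rightarrow> real ^ 'n \<Rightarrow> real ^ 'n \<Rightarrow> real ^ 'n \<Rightarrow> real ^ 'n \<Rightarrow> real ^ 'n"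
    and P :: "real ^ 'n"
    and eps \<Lambda> L0 L1 C0 C1 c1 c2 :: real
  assumes norm: "is_norm nrm"
    and P_fix: "P = H 0 0 0 P P"
    and eps_pos: "eps > 0"
    and consts_nonneg: "0 \<le> \<Lambda>" "0 \<le> L0" "0 \<le> L1" "0 \<le> C0" "0 \<le> C1"
    and C_lt1: "C0 + C1 < 1"
    and lip_t: "\<And>t t' z0 z1 x0 x1.
        (t, z0, z1, x0, x1) \<in> Nbhd nrm P eps \<Longrightarrow> (t', z0, z1, x0, x1) \<in> Nbhd nrm P eps \<Longrightarrow>
        nrm (H t' z0 z1 x0 x1 - H t z0 z1 x0 x1) \<le> \<Lambda> * \<bar>t' - t\<bar>"
    and lip_z: "\<And>t z0 z1 z0' z1' x0 x1.
        (t, z0, z1, x0, x1) \<in> Nbhd nrm P eps \<Longrightarrow> (t, z0', z1', x0, x1) \<in> Nbhd nrm P eps \<Longrightarrow>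
        nrm (H t z0' z1' x0 x1 - H t z0 z1 x0 x1) \<le> L0 * nrm (z0' - z0) + L1 * nrm (z1' - z1)"
    and lip_x: "\<And>t z0 z1 x0 x1 x0' x1'.
        (t, z0, z1, x0, x1) \<in> Nbhd nrm P eps \<Longrightarrow> (t, z0, z1, x0', x1') \<in> Nbhd nrm P eps \<Longrightarrow>
        nrm (H t z0 z1 x0' x1' - H t z0 z1 x0 x1) \<le> C0 * nrm (x0' - x0) + C1 * nrm (x1' - x1)"
    and h1_bound: "\<And>t z0 z1 x0 x1.
        (t, z0, z1, x0, x1) \<in> Nbhd nrm P eps \<Longrightarrow> \<bar>H t z0 z1 x0 x1 $ i1\<bar> \<le> 1"
    and c1: "c1 > 0" "\<And>x. nrm x \<le> c1 * norm x"
    and c2: "c2 > 0" "\<And>x. norm x \<le> c2 * nrm x"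
begin

lemmas N = is_normD[OF norm]

lemma tri: "nrm (a - c) \<le> nrm (a - b) + nrm (b - c)"
  using N(4)[of "a - b" "b - c"] by simp

definition small where
  "small t z0 z1 x0 x1 \<longleftrightarrow> \<bar>t\<bar> \<le> eps/5 \<and> nrm z0 \<le> eps/5 \<and> nrm z1 \<le> eps/5 \<and>
     nrm (x0 - P) \<le> eps/5 \<and> nrm (x1 - P) \<le> eps/5"

lemma small_N: "small t z0 z1 x0 x1 \<Longrightarrow> (t, z0, z1, x0, x1) \<in> Nbhd nrm P eps"
  unfolding small_def Nbhd_def by auto

lemma G:
  assumes A: "small t z0 z1 x0 x1" and B: "small t' z0' z1' x0' x1'"
  shows "nrm (H t z0 z1 x0 x1 - H t' z0' z1' x0' x1') \<le> \<Lambda> * \<bar>t - t'\<bar> + L0 * nrm (z0 - z0')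
     + L1 * nrm (z1 - z1') + C0 * nrm (x0 - x0') + C1 * nrm (x1 - x1')"
proof -
  have m1: "small t' z0 z1 x0 x1" and m2: "small t' z0' z1' x0 x1"
    using A B unfolding small_def by auto
  have h1: "nrm (H t' z0 z1 x0 x1 - H t z0 z1 x0 x1) \<le> \<Lambda> * \<bar>t' - t\<bar>"
    by (rule lip_t[OF small_N[OF A] small_N[OF m1]])
  have h2: "nrm (H t' z0' z1' x0 x1 - H t' z0 z1 x0 x1) \<le> L0 * nrm (z0' - z0) + L1 * nrm (z1' - z1)"
    by (rule lip_z[OF small_N[OF m1] small_N[OF m2]])
  have h3: "nrm (H t' z0' z1' x0' x1' - H t' z0' z1' x0 x1) \<le> C0 * nrm (x0' - x0) + C1 * nrm (x1' - x1)"
    by (rule lip_x[OF small_N[OF m2] small_N[OF B]])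
  have t1: "nrm (H t z0 z1 x0 x1 - H t' z0' z1' x0' x1') \<le>
      nrm (H t z0 z1 x0 x1 - H t' z0 z1 x0 x1) + nrm (H t' z0 z1 x0 x1 - H t' z0' z1' x0' x1')"
    by (rule tri)
  have t2: "nrm (H t' z0 z1 x0 x1 - H t' z0' z1' x0' x1') \<le>
      nrm (H t' z0 z1 x0 x1 - H t' z0' z1' x0 x1) + nrm (H t' z0' z1' x0 x1 - H t' z0' z1' x0' x1')"
    by (rule tri)
  have e1: "nrm (H t z0 z1 x0 x1 - H t' z0 z1 x0 x1) = nrm (H t' z0 z1 x0 x1 - H t z0 z1 x0 x1)" by (rule N(5))
  have e2: "nrm (H t' z0 z1 x0 x1 - H t' z0' z1' x0 x1) = nrm (H t' z0' z1' x0 x1 - H t' z0 z1 x0 x1)" by (rule N(5))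
  have e3: "nrm (H t' z0' z1' x0 x1 - H t' z0' z1' x0' x1') = nrm (H t' z0' z1' x0' x1' - H t' z0' z1' x0 x1)" by (rule N(5))
  have e4: "nrm (z0' - z0) = nrm (z0 - z0')" "nrm (z1' - z1) = nrm (z1 - z1')"
    "nrm (x0' - x0) = nrm (x0 - x0')" "nrm (x1' - x1) = nrm (x1 - x1')" by (rule N(5))+
  have e5: "\<bar>t' - t\<bar> = \<bar>t - t'\<bar>" by simp
  show ?thesis using t1 t2 h1 h2 h3 unfolding e1 e2 e3 e4 e5 by linarith
qed

lemma G0:
  assumes A: "(t, z0, z1, x0, x1) \<in> Nbhd nrm P eps"
  shows "nrm (H t z0 z1 x0 x1 - P) \<le> \<Lambda> * \<bar>t\<bar> + L0 * nrm z0 + L1 * nrm z1 + C0 * nrm (x0 - P) + C1 * nrm (x1 - P)"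
proof -
  have m1: "(0, z0, z1, x0, x1) \<in> Nbhd nrm P eps" and m2: "(0, 0, 0, x0, x1) \<in> Nbhd nrm P eps"
    and m3: "(0, 0, 0, P, P) \<in> Nbhd nrm P eps"
    using A N(1)[of z0] N(1)[of z1] N(2) eps_pos unfolding Nbhd_def by auto
  have h1: "nrm (H 0 z0 z1 x0 x1 - H t z0 z1 x0 x1) \<le> \<Lambda> * \<bar>0 - t\<bar>"
    by (rule lip_t[OF A m1])
  have h2: "nrm (H 0 z0 z1 x0 x1 - H 0 0 0 x0 x1) \<le> L0 * nrm (z0 - 0) + L1 * nrm (z1 - 0)"
    by (rule lip_z[OF m2 m1])
  have h3: "nrm (H 0 0 0 x0 x1 - H 0 0 0 P P) \<le> C0 * nrm (x0 - P) + C1 * nrm (x1 - P)"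
    by (rule lip_x[OF m3 m2])
  have "nrm (H t z0 z1 x0 x1 - H 0 0 0 P P) \<le>
      nrm (H t z0 z1 x0 x1 - H 0 z0 z1 x0 x1) + nrm (H 0 z0 z1 x0 x1 - H 0 0 0 P P)"
    by (rule tri)
  also have "nrm (H 0 z0 z1 x0 x1 - H 0 0 0 P P) \<le>
      nrm (H 0 z0 z1 x0 x1 - H 0 0 0 x0 x1) + nrm (H 0 0 0 x0 x1 - H 0 0 0 P P)"
    by (rule tri)
  finally show ?thesis using h1 h2 h3 P_fix
    by (simp add: N(5)[of "H t z0 z1 x0 x1"])
qed

end

context sys begin

definition sol where
  "sol \<delta> W W' \<longleftrightarrow> 0 \<le> \<delta> \<and> (\<forall>t\<in>{-\<delta>..\<delta>}. (W has_vector_derivative W' t) (at t within {-\<delta>..\<delta>})) \<and>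
     (\<forall>t\<in>{-\<delta>..\<delta>}. W t $ i1 \<in> {-\<delta>..\<delta>}) \<and>
     (\<forall>t\<in>{-\<delta>..\<delta>}. W' t = H t (W t) (W (W t $ i1)) (W' t) (W' (W t $ i1))) \<and> W 0 = 0 \<and>
     (\<forall>t\<in>{-\<delta>..\<delta>}. (t, W t, W (W t $ i1), W' t, W' (W t $ i1)) \<in> Nbhd nrm P eps)"

definition "K = c1 * c2 * (nrm P + eps)"
definition "M0 = (\<Lambda> + (L0 + L1) * K) / (1 - C0 - C1)"

lemma K_nonneg: "K \<ge> 0"
  unfolding K_def using c1 c2 N(1)[of P] eps_pos by simp

lemma M0_nonneg: "M0 \<ge> 0"
  unfolding M0_def using K_nonneg consts_nonneg C_lt1 by simp

lemma Nbhd_x: "(t, z0, z1, x0, x1) \<in> Nbhd nrm P eps \<Longrightarrow> nrm (x0 - P) \<le> eps \<and> nrm (x1 - P) \<le> eps"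
  unfolding Nbhd_def using N(1)[of z0] N(1)[of z1] N(1)[of "x0 - P"] N(1)[of "x1 - P"] by auto

lemma sol_w:
  assumes "sol \<delta> W W'" "t \<in> {-\<delta>..\<delta>}" "s \<in> {-\<delta>..\<delta>}"
  shows "\<bar>W t $ i1 - W s $ i1\<bar> \<le> \<bar>t - s\<bar>"
proof -
  have "norm (W t $ i1 - W s $ i1) \<le> 1 * \<bar>t - s\<bar>"
  proof (rule mvt_bound[where f' = "\<lambda>t. W' t $ i1"])
    fix x assume x: "x \<in> {-\<delta>..\<delta>}"
    show "((\<lambda>t. W t $ i1) has_vector_derivative W' x $ i1) (at x within {-\<delta>..\<delta>})"
      using assms(1) x unfolding sol_def
      by (intro bounded_linear.has_vector_derivative[OF bounded_linear_vec_nth]) auto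
    have eq: "W' x = H x (W x) (W (W x $ i1)) (W' x) (W' (W x $ i1))" using assms(1) x unfolding sol_def by auto
    have nb: "(x, W x, W (W x $ i1), W' x, W' (W x $ i1)) \<in> Nbhd nrm P eps" using assms(1) x unfolding sol_def by auto
    have "\<bar>H x (W x) (W (W x $ i1)) (W' x) (W' (W x $ i1)) $ i1\<bar> \<le> 1" by (rule h1_bound[OF nb])
    then show "norm (W' x $ i1) \<le> 1" using eq by simp
  qed (use assms in auto)
  then show ?thesis by simp
qed

lemma sol_w0:
  assumes "sol \<delta> W W'" "t \<in> {-\<delta>..\<delta>}"
  shows "\<bar>W t $ i1\<bar> \<le> \<bar>t\<bar>"
  using sol_w[OF assms(1,2), of 0] assms unfolding sol_def by auto

lemma sol_W':
  assumes "sol \<delta> W W'" "t \<in> {-\<delta>..\<delta>}"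
  shows "nrm (W' t - P) \<le> eps" "nrm (W' t) \<le> nrm P + eps"
proof -
  show a: "nrm (W' t - P) \<le> eps" using Nbhd_x assms unfolding sol_def by blast
  have "nrm (W' t) \<le> nrm (W' t - P) + nrm P" using N(4)[of "W' t - P" P] by simp
  then show "nrm (W' t) \<le> nrm P + eps" using a by simp
qed

lemma sol_W:
  assumes "sol \<delta> W W'" "t \<in> {-\<delta>..\<delta>}" "s \<in> {-\<delta>..\<delta>}"
  shows "nrm (W t - W s) \<le> K * \<bar>t - s\<bar>"
proof -
  have "norm (W t - W s) \<le> (c2 * (nrm P + eps)) * \<bar>t - s\<bar>"
  proof (rule mvt_bound[where f' = W'])
    fix x assume x: "x \<in> {-\<delta>..\<delta>}"
    show "(W has_vector_derivative W' x) (at x within {-\<delta>..\<delta>})" using assms(1) x unfolding sol_def by auto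
    have "norm (W' x) \<le> c2 * nrm (W' x)" by (rule c2(2))
    also have "\<dots> \<le> c2 * (nrm P + eps)" using sol_W'(2)[OF assms(1) x] c2(1) by simp
    finally show "norm (W' x) \<le> c2 * (nrm P + eps)" .
  qed (use assms in auto)
  then have "c1 * norm (W t - W s) \<le> c1 * ((c2 * (nrm P + eps)) * \<bar>t - s\<bar>)" using c1(1) by simp
  then show ?thesis using c1(2)[of "W t - W s"] unfolding K_def by (simp add: algebra_simps)
qed

lemma sol_W0:
  assumes "sol \<delta> W W'" "t \<in> {-\<delta>..\<delta>}"
  shows "nrm (W t) \<le> K * \<bar>t\<bar>"
  using sol_W[OF assms(1,2), of 0] assms unfolding sol_def by auto

lemma abs_K: assumes "s \<in> {-\<delta>..\<delta>}" shows "K * \<bar>s\<bar> \<le> K * \<delta>"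
proof -
  have "\<bar>s\<bar> \<le> \<delta>" using assms by auto
  then show ?thesis using K_nonneg by (rule mult_left_mono)
qed

lemma sol_Wd:
  assumes "sol \<delta> W W'" "t \<in> {-\<delta>..\<delta>}"
  shows "nrm (W t) \<le> K * \<delta>"
  using sol_W0[OF assms] abs_K[OF assms(2)] by linarith

lemma sol_apriori:
  assumes "sol \<delta> W W'" "\<delta> \<le> eps/5" "K * \<delta> \<le> eps/5" "M0 * \<delta> \<le> eps/5"
  shows "\<forall>t\<in>{-\<delta>..\<delta>}. nrm (W' t - P) \<le> eps/5"
proof -
  have "\<forall>t\<in>{-\<delta>..\<delta>}. nrm (W' t - P) \<le> (\<Lambda> * \<delta> + L0 * (K * \<delta>) + L1 * (K * \<delta>)) / (1 - (C0 + C1))"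
  proof (rule sup_contract[where B = eps])
    show "{-\<delta>..\<delta>} \<noteq> {}" using assms(1) unfolding sol_def by auto
    show "nrm (W' t - P) \<le> eps" if "t \<in> {-\<delta>..\<delta>}" for t using sol_W'(1)[OF assms(1) that] .
    show "C0 + C1 < 1" by (rule C_lt1)
    fix a assume a: "\<And>t. t \<in> {-\<delta>..\<delta>} \<Longrightarrow> nrm (W' t - P) \<le> a"
    show "\<forall>t\<in>{-\<delta>..\<delta>}. nrm (W' t - P) \<le> \<Lambda> * \<delta> + L0 * (K * \<delta>) + L1 * (K * \<delta>) + (C0 + C1) * a"
    proof
      fix t assume t: "t \<in> {-\<delta>..\<delta>}"
      define w where "w = W t $ i1"
      have w: "w \<in> {-\<delta>..\<delta>}" using assms(1) t unfolding sol_def w_def by auto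
      have eq: "W' t = H t (W t) (W w) (W' t) (W' w)" using assms(1) t unfolding sol_def w_def by auto
      have inN: "(t, W t, W w, W' t, W' w) \<in> Nbhd nrm P eps" using assms(1) t unfolding sol_def w_def by auto
      have g: "nrm (W' t - P) \<le> \<Lambda> * \<bar>t\<bar> + L0 * nrm (W t) + L1 * nrm (W w) + C0 * nrm (W' t - P) + C1 * nrm (W' w - P)"
        using G0[OF inN] eq by simp
      have b1: "\<Lambda> * \<bar>t\<bar> \<le> \<Lambda> * \<delta>" using t consts_nonneg by (intro mult_left_mono) auto
      have b2: "L0 * nrm (W t) \<le> L0 * (K * \<delta>)"
        using sol_Wd[OF assms(1) t] consts_nonneg by (intro mult_left_mono) auto
      have b3: "L1 * nrm (W w) \<le> L1 * (K * \<delta>)"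
        using sol_Wd[OF assms(1) w] consts_nonneg by (intro mult_left_mono) auto
      have b4: "C0 * nrm (W' t - P) \<le> C0 * a" using a[OF t] consts_nonneg by (intro mult_left_mono) auto
      have b5: "C1 * nrm (W' w - P) \<le> C1 * a" using a[OF w] consts_nonneg by (intro mult_left_mono) auto
      show "nrm (W' t - P) \<le> \<Lambda> * \<delta> + L0 * (K * \<delta>) + L1 * (K * \<delta>) + (C0 + C1) * a"
        using g b1 b2 b3 b4 b5 by (simp add: algebra_simps)
    qed
  qed
  moreover have "(\<Lambda> * \<delta> + L0 * (K * \<delta>) + L1 * (K * \<delta>)) / (1 - (C0 + C1)) = M0 * \<delta>"
    unfolding M0_def using C_lt1 by (simp add: field_simps)
  ultimately show ?thesis using assms(4) by auto
qed

lemma sol_small: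
  assumes "sol \<delta> W W'" "\<delta> \<le> eps/5" "K * \<delta> \<le> eps/5" "M0 * \<delta> \<le> eps/5" "t \<in> {-\<delta>..\<delta>}"
  shows "small t (W t) (W (W t $ i1)) (W' t) (W' (W t $ i1))"
proof -
  have w: "W t $ i1 \<in> {-\<delta>..\<delta>}" using assms(1,5) unfolding sol_def by auto
  have k: "K * \<bar>s\<bar> \<le> eps/5" if "s \<in> {-\<delta>..\<delta>}" for s
  proof -
    have "\<bar>s\<bar> \<le> \<delta>" using that by auto
    then have "K * \<bar>s\<bar> \<le> K * \<delta>" using K_nonneg by (rule mult_left_mono)
    then show ?thesis using assms(3) by linarith
  qed
  show ?thesis unfolding small_def
    using assms(2,5) sol_W0[OF assms(1) assms(5)] sol_W0[OF assms(1) w] k[OF assms(5)] k[OF w]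
      sol_apriori[OF assms(1-4)] w by auto
qed

end

context sys begin

lemma sol_lip:
  assumes S: "sol \<delta> W W'" "\<delta> \<le> eps/5" "K * \<delta> \<le> eps/5" "M0 * \<delta> \<le> eps/5"
    and t: "t \<in> {-\<delta>..\<delta>}" "s \<in> {-\<delta>..\<delta>}"
  shows "nrm (W' t - W' s) \<le> M0 * \<bar>t - s\<bar>"
proof (cases "t = s")
  case True then show ?thesis using N(2) by simp
next
  case False
  define h where "h = \<bar>t - s\<bar>"
  have hpos: "h > 0" using False unfolding h_def by simp
  define S where "S = {(x, y). x \<in> {-\<delta>..\<delta>} \<and> y \<in> {-\<delta>..\<delta>} \<and> \<bar>x - y\<bar> \<le> h}"
  have ts: "(t, s) \<in> S" using t unfolding S_def h_def by auto
  have main: "\<forall>p\<in>S. (\<lambda>(x, y). nrm (W' x - W' y)) p \<le> (\<Lambda> * h + L0 * (K * h) + L1 * (K * h)) / (1 - (C0 + C1))"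
  proof (rule sup_contract[where B = "2 * eps"])
    show "S \<noteq> {}" using ts by auto
    show "C0 + C1 < 1" by (rule C_lt1)
    show "(\<lambda>(x, y). nrm (W' x - W' y)) p \<le> 2 * eps" if "p \<in> S" for p
    proof -
      obtain x y where p: "p = (x, y)" "x \<in> {-\<delta>..\<delta>}" "y \<in> {-\<delta>..\<delta>}" using \<open>p \<in> S\<close> unfolding S_def by auto
      have "nrm (W' x - W' y) \<le> nrm (W' x - P) + nrm (P - W' y)" by (rule tri)
      moreover have "nrm (P - W' y) = nrm (W' y - P)" by (rule N(5))
      ultimately show ?thesis using p sol_W'(1)[OF S(1) p(2)] sol_W'(1)[OF S(1) p(3)] by simp
    qed
    fix a assume a: "\<And>p. p \<in> S \<Longrightarrow> (\<lambda>(x, y). nrm (W' x - W' y)) p \<le> a"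
    show "\<forall>p\<in>S. (\<lambda>(x, y). nrm (W' x - W' y)) p \<le> \<Lambda> * h + L0 * (K * h) + L1 * (K * h) + (C0 + C1) * a"
    proof
      fix p assume "p \<in> S"
      then obtain x y where p: "p = (x, y)" "x \<in> {-\<delta>..\<delta>}" "y \<in> {-\<delta>..\<delta>}" "\<bar>x - y\<bar> \<le> h"
        unfolding S_def by auto
      define wx where "wx = W x $ i1"
      define wy where "wy = W y $ i1"
      have wx: "wx \<in> {-\<delta>..\<delta>}" and wy: "wy \<in> {-\<delta>..\<delta>}" using S(1) p unfolding sol_def wx_def wy_def by auto
      have dw: "\<bar>wx - wy\<bar> \<le> h" using sol_w[OF S(1) p(2,3)] p(4) unfolding wx_def wy_def by linarith
      have a1: "nrm (W' x - W' y) \<le> a" using a[of "(x, y)"] p unfolding S_def by auto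
      have a2: "nrm (W' wx - W' wy) \<le> a" using a[of "(wx, wy)"] wx wy dw unfolding S_def by auto
      have eqx: "W' x = H x (W x) (W wx) (W' x) (W' wx)" using S(1) p(2) unfolding sol_def wx_def by auto
      have eqy: "W' y = H y (W y) (W wy) (W' y) (W' wy)" using S(1) p(3) unfolding sol_def wy_def by auto
      have g: "nrm (W' x - W' y) \<le> \<Lambda> * \<bar>x - y\<bar> + L0 * nrm (W x - W y) + L1 * nrm (W wx - W wy)
          + C0 * nrm (W' x - W' y) + C1 * nrm (W' wx - W' wy)"
        using G[OF sol_small[OF S p(2)] sol_small[OF S p(3)]] eqx eqy unfolding wx_def wy_def by simp
      have kh: "K * \<bar>x - y\<bar> \<le> K * h" using p(4) K_nonneg by (rule mult_left_mono)
      have kh2: "K * \<bar>wx - wy\<bar> \<le> K * h" using dw K_nonneg by (rule mult_left_mono)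
      have b1: "\<Lambda> * \<bar>x - y\<bar> \<le> \<Lambda> * h" using p(4) consts_nonneg(1) by (rule mult_left_mono)
      have b2: "L0 * nrm (W x - W y) \<le> L0 * (K * h)"
        using sol_W[OF S(1) p(2,3)] kh consts_nonneg(2) by (intro mult_left_mono) auto
      have b3: "L1 * nrm (W wx - W wy) \<le> L1 * (K * h)"
        using sol_W[OF S(1) wx wy] kh2 consts_nonneg(3) by (intro mult_left_mono) auto
      have b4: "C0 * nrm (W' x - W' y) \<le> C0 * a" using a1 consts_nonneg(4) by (rule mult_left_mono)
      have b5: "C1 * nrm (W' wx - W' wy) \<le> C1 * a" using a2 consts_nonneg(5) by (rule mult_left_mono)
      show "(\<lambda>(x, y). nrm (W' x - W' y)) p \<le> \<Lambda> * h + L0 * (K * h) + L1 * (K * h) + (C0 + C1) * a"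
        using g b1 b2 b3 b4 b5 p(1) by (simp add: algebra_simps)
    qed
  qed
  have "(\<Lambda> * h + L0 * (K * h) + L1 * (K * h)) / (1 - (C0 + C1)) = M0 * h"
    unfolding M0_def using C_lt1 by (simp add: field_simps)
  then show ?thesis using main ts unfolding h_def by auto
qed

end

context sys begin

definition "Q = L0 * (c1 * c2) + L1 * (c1 * c2 + K * c2) + C1 * (M0 * c2)"

lemma Q_nonneg: "Q \<ge> 0"
  unfolding Q_def using consts_nonneg c1 c2 K_nonneg M0_nonneg by simp

lemma uniq:
  assumes S1: "sol \<delta>1 W1 W1'" "\<delta>1 \<le> eps/5" "K * \<delta>1 \<le> eps/5" "M0 * \<delta>1 \<le> eps/5"
    and S2: "sol \<delta>2 W2 W2'" "\<delta>2 \<le> eps/5" "K * \<delta>2 \<le> eps/5" "M0 * \<delta>2 \<le> eps/5"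
    and q: "Q * min \<delta>1 \<delta>2 \<le> (1 - C0 - C1) / 2"
    and t: "t \<in> {- min \<delta>1 \<delta>2 .. min \<delta>1 \<delta>2}"
  shows "W1 t = W2 t"
proof -
  define \<delta> where "\<delta> = min \<delta>1 \<delta>2"
  define I where "I = {-\<delta>..\<delta>}"
  have sub1: "I \<subseteq> {-\<delta>1..\<delta>1}" and sub2: "I \<subseteq> {-\<delta>2..\<delta>2}" unfolding I_def \<delta>_def by auto
  have d0: "0 \<le> \<delta>" using S1(1) S2(1) unfolding sol_def \<delta>_def by auto
  have zI: "0 \<in> I" using d0 unfolding I_def by auto
  have derU: "((\<lambda>x. W1 x - W2 x) has_vector_derivative (W1' x - W2' x)) (at x within I)" if "x \<in> I" for x
  proof -
    have "(W1 has_vector_derivative W1' x) (at x within {-\<delta>1..\<delta>1})" using S1(1) sub1 that unfolding sol_def by auto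
    then have a: "(W1 has_vector_derivative W1' x) (at x within I)" using has_vector_derivative_within_subset sub1 by blast
    have "(W2 has_vector_derivative W2' x) (at x within {-\<delta>2..\<delta>2})" using S2(1) sub2 that unfolding sol_def by auto
    then have b: "(W2 has_vector_derivative W2' x) (at x within I)" using has_vector_derivative_within_subset sub2 by blast
    show ?thesis using has_vector_derivative_diff[OF a b] .
  qed
  have U0: "W1 0 - W2 0 = 0" using S1(1) S2(1) unfolding sol_def by simp
  have qd: "Q * \<delta> \<le> (1 - C0 - C1) / 2" using q unfolding \<delta>_def .
  have hh: "(1 - C0 - C1) / 2 < 1 - C0 - C1" using C_lt1 by simp
  have beta: "C0 + C1 + Q * \<delta> < 1" using qd hh by linarith
  have key: "\<forall>x\<in>I. nrm (W1' x - W2' x) \<le> 0 / (1 - (C0 + C1 + Q * \<delta>))"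
  proof (rule sup_contract[where B = "2 * eps"])
    show "I \<noteq> {}" using zI by auto
    show "C0 + C1 + Q * \<delta> < 1" by (rule beta)
    show "nrm (W1' x - W2' x) \<le> 2 * eps" if "x \<in> I" for x
    proof -
      have "nrm (W1' x - W2' x) \<le> nrm (W1' x - P) + nrm (P - W2' x)" by (rule tri)
      moreover have "nrm (P - W2' x) = nrm (W2' x - P)" by (rule N(5))
      ultimately show ?thesis using sol_W'(1)[OF S1(1)] sol_W'(1)[OF S2(1)] that sub1 sub2
        by (smt (verit) subsetD)
    qed
    fix a assume a: "\<And>y. y \<in> I \<Longrightarrow> nrm (W1' y - W2' y) \<le> a"
    have a0: "0 \<le> a" using a[OF zI] N(1)[of "W1' 0 - W2' 0"] by linarith
    have c2a: "0 \<le> c2 * a" using a0 c2(1) by simp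
    have Unorm: "norm (W1 x - W2 x) \<le> c2 * a * \<delta>" if x: "x \<in> I" for x
    proof -
      have "norm ((W1 x - W2 x) - (W1 0 - W2 0)) \<le> (c2 * a) * \<bar>x - 0\<bar>"
      proof (rule mvt_bound[where f' = "\<lambda>x. W1' x - W2' x"])
        fix y assume y: "y \<in> {-\<delta>..\<delta>}"
        show "((\<lambda>x. W1 x - W2 x) has_vector_derivative W1' y - W2' y) (at y within {-\<delta>..\<delta>})"
          using derU y unfolding I_def by auto
        have "norm (W1' y - W2' y) \<le> c2 * nrm (W1' y - W2' y)" by (rule c2(2))
        also have "\<dots> \<le> c2 * a" using a[of y] y c2(1) unfolding I_def by simp
        finally show "norm (W1' y - W2' y) \<le> c2 * a" .
      qed (use x zI in \<open>auto simp: I_def\<close>)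
      moreover have "(c2 * a) * \<bar>x\<bar> \<le> (c2 * a) * \<delta>" using x c2a unfolding I_def by (intro mult_left_mono) auto
      ultimately show ?thesis using U0 by simp
    qed
    have Unrm: "nrm (W1 x - W2 x) \<le> c1 * c2 * a * \<delta>" if x: "x \<in> I" for x
    proof -
      have "c1 * norm (W1 x - W2 x) \<le> c1 * (c2 * a * \<delta>)" using Unorm[OF x] c1(1) by simp
      then show ?thesis using c1(2)[of "W1 x - W2 x"] by (simp add: algebra_simps)
    qed
    show "\<forall>x\<in>I. nrm (W1' x - W2' x) \<le> 0 + (C0 + C1 + Q * \<delta>) * a"
    proof
      fix x assume x: "x \<in> I"
      have x1: "x \<in> {-\<delta>1..\<delta>1}" and x2: "x \<in> {-\<delta>2..\<delta>2}" using x sub1 sub2 by auto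
      define w1 where "w1 = W1 x $ i1"
      define w2 where "w2 = W2 x $ i1"
      have "\<bar>w1\<bar> \<le> \<bar>x\<bar>" using sol_w0[OF S1(1) x1] unfolding w1_def .
      then have w1: "w1 \<in> I" using x unfolding I_def by auto
      have "\<bar>w2\<bar> \<le> \<bar>x\<bar>" using sol_w0[OF S2(1) x2] unfolding w2_def .
      then have w2: "w2 \<in> I" using x unfolding I_def by auto
      have w12: "w1 \<in> {-\<delta>2..\<delta>2}" "w2 \<in> {-\<delta>2..\<delta>2}" using w1 w2 sub2 by auto
      have dw: "\<bar>w1 - w2\<bar> \<le> c2 * a * \<delta>"
      proof -
        have "\<bar>(W1 x - W2 x) $ i1\<bar> \<le> norm (W1 x - W2 x)" by (rule component_le_norm_cart)
        then show ?thesis using Unorm[OF x] unfolding w1_def w2_def by simp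
      qed
      have eq1: "W1' x = H x (W1 x) (W1 w1) (W1' x) (W1' w1)" using S1(1) x1 unfolding sol_def w1_def by auto
      have eq2: "W2' x = H x (W2 x) (W2 w2) (W2' x) (W2' w2)" using S2(1) x2 unfolding sol_def w2_def by auto
      have g: "nrm (W1' x - W2' x) \<le> \<Lambda> * \<bar>x - x\<bar> + L0 * nrm (W1 x - W2 x) + L1 * nrm (W1 w1 - W2 w2)
          + C0 * nrm (W1' x - W2' x) + C1 * nrm (W1' w1 - W2' w2)"
        using G[OF sol_small[OF S1 x1] sol_small[OF S2 x2]] eq1 eq2 unfolding w1_def w2_def by simp
      have z1: "nrm (W1 w1 - W2 w2) \<le> c1 * c2 * a * \<delta> + K * (c2 * a * \<delta>)"
      proof -
        have "nrm (W1 w1 - W2 w2) \<le> nrm (W1 w1 - W2 w1) + nrm (W2 w1 - W2 w2)" by (rule tri)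
        moreover have "nrm (W2 w1 - W2 w2) \<le> K * \<bar>w1 - w2\<bar>" by (rule sol_W[OF S2(1) w12])
        moreover have "K * \<bar>w1 - w2\<bar> \<le> K * (c2 * a * \<delta>)" using dw K_nonneg by (rule mult_left_mono)
        ultimately show ?thesis using Unrm[OF w1] by linarith
      qed
      have x1': "nrm (W1' w1 - W2' w2) \<le> a + M0 * (c2 * a * \<delta>)"
      proof -
        have "nrm (W1' w1 - W2' w2) \<le> nrm (W1' w1 - W2' w1) + nrm (W2' w1 - W2' w2)" by (rule tri)
        moreover have "nrm (W2' w1 - W2' w2) \<le> M0 * \<bar>w1 - w2\<bar>" by (rule sol_lip[OF S2 w12])
        moreover have "M0 * \<bar>w1 - w2\<bar> \<le> M0 * (c2 * a * \<delta>)" using dw M0_nonneg by (rule mult_left_mono)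
        ultimately show ?thesis using a[OF w1] by linarith
      qed
      have b2: "L0 * nrm (W1 x - W2 x) \<le> L0 * (c1 * c2 * a * \<delta>)" using Unrm[OF x] consts_nonneg(2) by (rule mult_left_mono)
      have b3: "L1 * nrm (W1 w1 - W2 w2) \<le> L1 * (c1 * c2 * a * \<delta> + K * (c2 * a * \<delta>))" using z1 consts_nonneg(3) by (rule mult_left_mono)
      have b4: "C0 * nrm (W1' x - W2' x) \<le> C0 * a" using a[OF x] consts_nonneg(4) by (rule mult_left_mono)
      have b5: "C1 * nrm (W1' w1 - W2' w2) \<le> C1 * (a + M0 * (c2 * a * \<delta>))" using x1' consts_nonneg(5) by (rule mult_left_mono)
      have id: "L0 * (c1 * c2 * a * \<delta>) + L1 * (c1 * c2 * a * \<delta> + K * (c2 * a * \<delta>)) + C0 * a + C1 * (a + M0 * (c2 * a * \<delta>))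
          = 0 + (C0 + C1 + Q * \<delta>) * a" unfolding Q_def by (simp add: algebra_simps)
      show "nrm (W1' x - W2' x) \<le> 0 + (C0 + C1 + Q * \<delta>) * a" using g b2 b3 b4 b5 id by simp
    qed
  qed
  have eqd: "W1' x - W2' x = 0" if "x \<in> I" for x
    using key that N(1)[of "W1' x - W2' x"] N(7)[of "W1' x - W2' x"] by force
  have "norm ((W1 t - W2 t) - (W1 0 - W2 0)) \<le> 0 * \<bar>t - 0\<bar>"
  proof (rule mvt_bound[where f' = "\<lambda>x. W1' x - W2' x"])
    fix y assume y: "y \<in> {-\<delta>..\<delta>}"
    show "((\<lambda>x. W1 x - W2 x) has_vector_derivative W1' y - W2' y) (at y within {-\<delta>..\<delta>})"
      using derU y unfolding I_def by auto
    show "norm (W1' y - W2' y) \<le> 0" using eqd y unfolding I_def by simp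
  qed (use t zI in \<open>auto simp: I_def \<delta>_def\<close>)
  then show ?thesis using U0 by simp
qed

end

lemma scale_le: fixes k d e :: real
  assumes "0 \<le> k" "0 \<le> d" "d \<le> e / (k + 1)" shows "k * d \<le> e"
proof -
  have "k * d \<le> (k + 1) * d" using assms by (simp add: distrib_right)
  also have "\<dots> \<le> (k + 1) * (e / (k + 1))" using assms by (intro mult_left_mono) auto
  also have "\<dots> = e" using assms by simp
  finally show ?thesis .
qed

theorem theorem4p4:
  fixes nrm :: "real ^ 'n \<Rightarrow> real"
    and i1 :: 'n
    and D :: "(real \<times> (real ^ 'n) \<times> (real ^ 'n) \<times> (real ^ 'n) \<times> (real ^ 'n)) set"
    and H :: "real \<Rightarrow> real ^ 'n \<Rightarrow> real ^ 'n \<Rightarrow> real ^ 'n \<Rightarrow> real ^ 'n \<Rightarrow> real ^ 'n"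
    and P :: "real ^ 'n"
    and eps \<Lambda> L0 L1 C0 C1 :: real
  assumes norm: "is_norm nrm"
    and D_open: "open D"
    and H_cont: "continuous_on D (\<lambda>(t, z0, z1, x0, x1). H t z0 z1 x0 x1)"
    and P_fix: "P = H 0 0 0 P P"
    and P1: "\<bar>P $ i1\<bar> \<le> 1"
    and eps_pos: "eps > 0"
    and N_sub: "Nbhd nrm P eps \<subseteq> D"
    and consts_nonneg: "0 \<le> \<Lambda>" "0 \<le> L0" "0 \<le> L1" "0 \<le> C0" "0 \<le> C1"
    and C_lt1: "C0 + C1 < 1"
    and lip_t: "\<And>t t' z0 z1 x0 x1.
        (t, z0, z1, x0, x1) \<in> Nbhd nrm P eps \<Longrightarrow> (t', z0, z1, x0, x1) \<in> Nbhd nrm P eps \<Longrightarrow>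
        nrm (H t' z0 z1 x0 x1 - H t z0 z1 x0 x1) \<le> \<Lambda> * \<bar>t' - t\<bar>"
    and lip_z: "\<And>t z0 z1 z0' z1' x0 x1.
        (t, z0, z1, x0, x1) \<in> Nbhd nrm P eps \<Longrightarrow> (t, z0', z1', x0, x1) \<in> Nbhd nrm P eps \<Longrightarrow>
        nrm (H t z0' z1' x0 x1 - H t z0 z1 x0 x1) \<le> L0 * nrm (z0' - z0) + L1 * nrm (z1' - z1)"
    and lip_x: "\<And>t z0 z1 x0 x1 x0' x1'.
        (t, z0, z1, x0, x1) \<in> Nbhd nrm P eps \<Longrightarrow> (t, z0, z1, x0', x1') \<in> Nbhd nrm P eps \<Longrightarrow>
        nrm (H t z0 z1 x0' x1' - H t z0 z1 x0 x1) \<le> C0 * nrm (x0' - x0) + C1 * nrm (x1' - x1)"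
    and h1_bound: "\<And>t z0 z1 x0 x1.
        (t, z0, z1, x0, x1) \<in> Nbhd nrm P eps \<Longrightarrow> \<bar>H t z0 z1 x0 x1 $ i1\<bar> \<le> 1"
  shows "\<exists>\<delta>s > 0. \<forall>\<delta>1 \<delta>2 W1 W1' W2 W2'.
     (0 < \<delta>1 \<and> \<delta>1 \<le> \<delta>s \<and> 0 < \<delta>2 \<and> \<delta>2 \<le> \<delta>s \<and>
      (\<forall>(\<delta>, W, W') \<in> {(\<delta>1, W1, W1'), (\<delta>2, W2, W2')}.
         (\<forall>t \<in> {-\<delta>..\<delta>}. (W has_vector_derivative W' t) (at t within {-\<delta>..\<delta>})) \<and>
         continuous_on {-\<delta>..\<delta>} W' \<and>
         (\<forall>t \<in> {-\<delta>..\<delta>}. W t $ i1 \<in> {-\<delta>..\<delta>}) \<and>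
         (\<forall>t \<in> {-\<delta>..\<delta>}. W' t = H t (W t) (W (W t $ i1)) (W' t) (W' (W t $ i1))) \<and>
         W 0 = 0 \<and> W' 0 = P \<and>
         (\<forall>t \<in> {-\<delta>..\<delta>}. (t, W t, W (W t $ i1), W' t, W' (W t $ i1)) \<in> Nbhd nrm P eps)))
     \<longrightarrow> (\<forall>t \<in> {- min \<delta>1 \<delta>2 .. min \<delta>1 \<delta>2}. W1 t = W2 t)"
proof -
  obtain c1 where c1: "c1 > 0" "\<And>x. nrm x \<le> c1 * norm x" using nrm_upper[OF norm] by blast
  obtain c2 where c2: "c2 > 0" "\<And>x. norm x \<le> c2 * nrm x" using nrm_lower[OF norm] by blast
  interpret S: sys nrm i1 H P eps \<Lambda> L0 L1 C0 C1 c1 c2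
    by (rule sys.intro) (fact norm P_fix eps_pos consts_nonneg C_lt1 lip_t lip_z lip_x h1_bound c1 c2)+
  define e where "e = eps / 5"
  have e0: "e > 0" using eps_pos unfolding e_def by simp
  define \<delta>s where "\<delta>s = min (min e (e / (S.K + 1))) (min (e / (S.M0 + 1)) (((1 - C0 - C1) / 2) / (S.Q + 1)))"
  have K1: "S.K + 1 > 0" using S.K_nonneg by linarith
  have M1: "S.M0 + 1 > 0" using S.M0_nonneg by linarith
  have Q1: "S.Q + 1 > 0" using S.Q_nonneg by linarith
  have ds0: "\<delta>s > 0" unfolding \<delta>s_def using e0 K1 M1 Q1 C_lt1 by simp
  have conds: "d \<le> eps/5 \<and> S.K * d \<le> eps/5 \<and> S.M0 * d \<le> eps/5 \<and> S.Q * d \<le> (1 - C0 - C1) / 2"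
    if "0 \<le> d" "d \<le> \<delta>s" for d
  proof (intro conjI)
    show "d \<le> eps/5" using that unfolding \<delta>s_def e_def by simp
    show "S.K * d \<le> eps/5" using that S.K_nonneg unfolding \<delta>s_def e_def by (intro scale_le) auto
    show "S.M0 * d \<le> eps/5" using that S.M0_nonneg unfolding \<delta>s_def e_def by (intro scale_le) auto
    show "S.Q * d \<le> (1 - C0 - C1) / 2" using that S.Q_nonneg unfolding \<delta>s_def by (intro scale_le) auto
  qed
  show ?thesis
  proof (intro exI[of _ \<delta>s] conjI allI impI ballI)
    show "\<delta>s > 0" by (rule ds0)
    fix \<delta>1 \<delta>2 :: real and W1 W1' W2 W2' :: "real \<Rightarrow> real ^ 'n" and t
    assume hyp: "0 < \<delta>1 \<and> \<delta>1 \<le> \<delta>s \<and> 0 < \<delta>2 \<and> \<delta>2 \<le> \<delta>s \<and>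
      (\<forall>(\<delta>, W, W') \<in> {(\<delta>1, W1, W1'), (\<delta>2, W2, W2')}.
         (\<forall>t \<in> {-\<delta>..\<delta>}. (W has_vector_derivative W' t) (at t within {-\<delta>..\<delta>})) \<and>
         continuous_on {-\<delta>..\<delta>} W' \<and>
         (\<forall>t \<in> {-\<delta>..\<delta>}. W t $ i1 \<in> {-\<delta>..\<delta>}) \<and>
         (\<forall>t \<in> {-\<delta>..\<delta>}. W' t = H t (W t) (W (W t $ i1)) (W' t) (W' (W t $ i1))) \<and>
         W 0 = 0 \<and> W' 0 = P \<and>
         (\<forall>t \<in> {-\<delta>..\<delta>}. (t, W t, W (W t $ i1), W' t, W' (W t $ i1)) \<in> Nbhd nrm P eps))"
    assume t: "t \<in> {- min \<delta>1 \<delta>2 .. min \<delta>1 \<delta>2}"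
    have sol1: "S.sol \<delta>1 W1 W1'" using hyp unfolding S.sol_def by auto
    have sol2: "S.sol \<delta>2 W2 W2'" using hyp unfolding S.sol_def by auto
    have c1': "\<delta>1 \<le> eps/5 \<and> S.K * \<delta>1 \<le> eps/5 \<and> S.M0 * \<delta>1 \<le> eps/5" using conds[of \<delta>1] hyp by auto
    have c2': "\<delta>2 \<le> eps/5 \<and> S.K * \<delta>2 \<le> eps/5 \<and> S.M0 * \<delta>2 \<le> eps/5" using conds[of \<delta>2] hyp by auto
    have q: "S.Q * min \<delta>1 \<delta>2 \<le> (1 - C0 - C1) / 2" using conds[of "min \<delta>1 \<delta>2"] hyp by auto
    show "W1 t = W2 t"
      using S.uniq[OF sol1 _ _ _ sol2 _ _ _ q t] c1' c2' by blast
  qed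
qed

end
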